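(* Assume $\mathcal L$ fulfills the specification property. Let $k\in\mathbb N$ and $\mathbf q_1,\ldots,\mathbf q_m\in\mathrm S_k$. For every $\varepsilon>0$ and every $\omega_0\in\mathcal L$ there exist $\omega\in\mathcal L$ having $\omega_0$ as a prefix and integers $n_1<n_2<\cdots<n_m$ such that $\|\mathrm P_k(\omega,n_i)-\mathbf q_i\|_1\le\varepsilon$ for all $1\le i\le m$.
   Context: $X\subseteq\Sigma^{\mathbb N}$, $\Sigma=\{0,\dots,N-1\}$, is the one-sided shift generated by a topological partition of a compact metric space under a continuous map; $\mathcal L$ is its language and $\mathcal L_k$ the words of length $k$. Specification property: there is $j\ge0$ such that for all $\mathbf a,\mathbf b\in\mathcal L$ there is $\mathbf u\in\mathcal L$ with $|\mathbf u|\le j$ and $\mathbf a\mathbf u\mathbf b\in\mathcal L$. For a word $\omega=a_1a_2\ldots$, block $\mathbf b$ of length $k$ and $n$ at most (length minus $k-1$), $\mathrm P(\omega,\mathbf b,n)=\frac1n|\{0\le i<n:a_{i+1}\ldots a_{i+k}=\mathbf b\}|$ and $\mathrm P_k(\omega,n)=(\mathrm P(\omega,\mathbf b,n))_{\mathbf b\in\mathcal L_k}$. $\mathrm S_k$ is the union over $\omega\in X$ of the sets of $\ell^1$-accumulation points of $(\mathrm P_k(\omega,n))_n$. *)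

theory Defs
  imports "HOL-Analysis.Analysis"
begin

definition topological_partition ::
  "'m::metric_space set \<Rightarrow> ('m \<Rightarrow> 'm) \<Rightarrow> (nat \<Rightarrow> 'm set) \<Rightarrow> nat \<Rightarrow> bool" where
  "topological_partition M T U N \<longleftrightarrow>
     compact M \<and> continuous_on M T \<and> T ` M \<subseteq> M \<and>
     (\<forall>i<N. openin (top_of_set M) (U i)) \<and>
     (\<forall>i<N. \<forall>j<N. i \<noteq> j \<longrightarrow> U i \<inter> U j = {}) \<and>
     M \<subseteq> closure (\<Union>i<N. U i)"

definition good_points :: "'m set \<Rightarrow> ('m \<Rightarrow> 'm) \<Rightarrow> (nat \<Rightarrow> 'm set) \<Rightarrow> nat \<Rightarrow> 'm set" where
  "good_points M T U N = {x \<in> M. \<forall>n. \<exists>i<N. (T ^^ n) x \<in> U i}"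

definition itinerary :: "('m \<Rightarrow> 'm) \<Rightarrow> (nat \<Rightarrow> 'm set) \<Rightarrow> nat \<Rightarrow> 'm \<Rightarrow> nat \<Rightarrow> nat" where
  "itinerary T U N x n = (THE i. i < N \<and> (T ^^ n) x \<in> U i)"

text \<open>The one-sided shift generated by the partition: closure (in the product
  topology of \<open>nat \<Rightarrow> nat\<close>, i.e. of \<open>\<Sigma>^\<nat>\<close>) of the itineraries.\<close>
definition partition_shift ::
  "'m set \<Rightarrow> ('m \<Rightarrow> 'm) \<Rightarrow> (nat \<Rightarrow> 'm set) \<Rightarrow> nat \<Rightarrow> (nat \<Rightarrow> nat) set" where
  "partition_shift M T U N = closure (itinerary T U N ` good_points M T U N)"

definition language :: "(nat \<Rightarrow> nat) set \<Rightarrow> nat list set" where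
  "language X = {w. \<exists>\<omega>\<in>X. \<exists>i. w = map \<omega> [i..<i + length w]}"

definition language_k :: "(nat \<Rightarrow> nat) set \<Rightarrow> nat \<Rightarrow> nat list set" where
  "language_k X k = {w \<in> language X. length w = k}"

definition has_specification :: "nat list set \<Rightarrow> bool" where
  "has_specification L \<longleftrightarrow>
     (\<exists>j. \<forall>a\<in>L. \<forall>b\<in>L. \<exists>u\<in>L. length u \<le> j \<and> a @ u @ b \<in> L)"

definition freq :: "nat list \<Rightarrow> nat list \<Rightarrow> nat \<Rightarrow> real" where
  "freq w b n = real (card {i. i < n \<and> take (length b) (drop i w) = b}) / real n"

text \<open>The vector P_k(w, n), indexed by blocks of length k (values outside
  L_k are irrelevant; only L_k-coordinates enter the norm).\<close>
definition Pk :: "nat list \<Rightarrow> nat \<Rightarrow> nat list \<Rightarrow> real" where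
  "Pk w n = (\<lambda>b. freq w b n)"

definition prefix_word :: "(nat \<Rightarrow> nat) \<Rightarrow> nat \<Rightarrow> nat list" where
  "prefix_word \<omega> n = map \<omega> [0..<n]"

definition dist1 :: "(nat \<Rightarrow> nat) set \<Rightarrow> nat \<Rightarrow> (nat list \<Rightarrow> real) \<Rightarrow> (nat list \<Rightarrow> real) \<Rightarrow> real" where
  "dist1 X k p q = (\<Sum>b\<in>language_k X k. \<bar>p b - q b\<bar>)"

text \<open>For infinite \<omega>, P_k(\<omega>, n) only depends on
  the prefix of length n + k - 1.\<close>
definition S_k :: "(nat \<Rightarrow> nat) set \<Rightarrow> nat \<Rightarrow> (nat list \<Rightarrow> real) set" where
  "S_k X k = {q. (\<forall>b. b \<notin> language_k X k \<longrightarrow> q b = 0) \<and>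
     (\<exists>\<omega>\<in>X. \<forall>e>0. \<forall>M. \<exists>n\<ge>M. n \<ge> 1 \<and>
        dist1 X k (Pk (prefix_word \<omega> (n + k)) n) q < e)}"

end

theory Submission
  imports Defs
begin

lemma count_le:
  assumes fB: "finite B"
  shows "(\<Sum>b\<in>B. card {i. i < L \<and> f i = b}) \<le> L"
proof -
  have "(\<Sum>b\<in>B. card {i. i < L \<and> f i = b}) = card (\<Union>b\<in>B. {i. i < L \<and> f i = b})"
    by (rule card_UN_disjoint[symmetric]) (auto simp: fB)
  also have "\<dots> \<le> card {..<L}" by (rule card_mono) auto
  finally show ?thesis by simp
qed

lemma freq_append:
  assumes "n + length b \<le> length W + 1"
  shows "freq (W @ V) b n = freq W b n"
proof -
  have "{i. i < n \<and> take (length b) (drop i (W @ V)) = b} = {i. i < n \<and> take (length b) (drop i W) = b}"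
    using assms by (auto simp: take_append)
  then show ?thesis by (simp add: freq_def)
qed

lemma count_split:
  "card {i. i < length P + n \<and> take (length b) (drop i (P@w)) = b} =
   card {i. i < length P \<and> take (length b) (drop i (P@w)) = b} + card {i. i < n \<and> take (length b) (drop i w) = b}"
proof -
  let ?S1 = "{i. i < length P \<and> take (length b) (drop i (P@w)) = b}"
  let ?S2 = "{i. i < n \<and> take (length b) (drop i w) = b}"
  have eq: "{i. i < length P + n \<and> take (length b) (drop i (P@w)) = b} = ?S1 \<union> (\<lambda>i. i + length P) ` ?S2"
  proof (rule set_eqI, rule iffI)
    fix x assume x: "x \<in> {i. i < length P + n \<and> take (length b) (drop i (P@w)) = b}"
    show "x \<in> ?S1 \<union> (\<lambda>i. i + length P) ` ?S2"
    proof (cases "x < length P")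
      case True then show ?thesis using x by auto
    next
      case False
      then have "x = (x - length P) + length P" by simp
      moreover have "x - length P \<in> ?S2" using x False by auto
      ultimately show ?thesis by blast
    qed
  next
    fix x assume "x \<in> ?S1 \<union> (\<lambda>i. i + length P) ` ?S2"
    then show "x \<in> {i. i < length P + n \<and> take (length b) (drop i (P@w)) = b}" by auto
  qed
  have "card (?S1 \<union> (\<lambda>i. i + length P) ` ?S2) = card ?S1 + card ((\<lambda>i. i + length P) ` ?S2)"
    by (rule card_Un_disjoint) auto
  also have "card ((\<lambda>i. i + length P) ` ?S2) = card ?S2"
    by (rule card_image) (auto simp: inj_on_def)
  finally show ?thesis using eq by simp
qed

lemma real_bound:
  fixes A c L n q :: real
  assumes "n > 0" "L \<ge> 0" "A \<ge> 0" "c \<ge> 0"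
  shows "\<bar>(A + c) / (L + n) - q\<bar> \<le> A / n + c * L / (n * n) + \<bar>c / n - q\<bar>"
proof -
  have e: "(A + c) / (L + n) - c / n = A / (L + n) - c * L / (n * (L + n))"
  proof -
    have p: "L + n \<noteq> 0" "n \<noteq> 0" using assms by auto
    have "c/(L+n) - c/n = - (c*L/(n*(L+n)))" using p by (simp add: divide_simps) (simp add: algebra_simps)
    then show ?thesis by (simp add: add_divide_distrib)
  qed
  have 1: "A / (L + n) \<le> A / n" using assms by (simp add: frac_le)
  have 2: "c * L / (n * (L + n)) \<le> c * L / (n * n)"
    using assms by (intro divide_left_mono mult_left_mono) auto
  have 3: "A / (L + n) \<ge> 0" "c * L / (n * (L + n)) \<ge> 0" using assms by auto
  have "\<bar>(A + c) / (L + n) - q\<bar> \<le> \<bar>(A + c) / (L + n) - c / n\<bar> + \<bar>c / n - q\<bar>" by linarith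
  also have "\<bar>(A + c) / (L + n) - c / n\<bar> \<le> A / n + c * L / (n * n)"
    unfolding e using 1 2 3 by linarith
  finally show ?thesis by linarith
qed

lemma approx:
  assumes fB: "finite B" and len: "\<forall>b\<in>B. length b = k" and n: "n \<ge> 1"
  shows "(\<Sum>b\<in>B. \<bar>freq (P@w) b (length P + n) - q b\<bar>) \<le>
    2 * real (length P) / real n + (\<Sum>b\<in>B. \<bar>freq w b n - q b\<bar>)"
proof -
  define A where "A b = card {i. i < length P \<and> take k (drop i (P@w)) = b}" for b
  define c where "c b = card {i. i < n \<and> take k (drop i w) = b}" for b
  define L where "L = length P"
  have fr1: "freq (P@w) b (length P + n) = (real (A b) + real (c b)) / (real L + real n)" if "b \<in> B" for b
    using count_split[of P n b w] len that by (simp add: freq_def A_def c_def L_def)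
  have fr2: "freq w b n = real (c b) / real n" if "b \<in> B" for b
    using len that by (simp add: freq_def c_def)
  have "(\<Sum>b\<in>B. \<bar>freq (P@w) b (length P + n) - q b\<bar>) \<le>
     (\<Sum>b\<in>B. real (A b) / real n + real (c b) * real L / (real n * real n) + \<bar>freq w b n - q b\<bar>)"
    by (rule sum_mono) (use n in \<open>auto simp: fr1 fr2 intro!: real_bound\<close>)
  also have "\<dots> = (\<Sum>b\<in>B. real (A b)) / real n + (\<Sum>b\<in>B. real (c b)) * real L / (real n * real n)
      + (\<Sum>b\<in>B. \<bar>freq w b n - q b\<bar>)"
    by (simp add: sum.distrib sum_divide_distrib sum_distrib_right)
  also have "(\<Sum>b\<in>B. real (A b)) \<le> real L"
    using count_le[OF fB, of L "\<lambda>i. take k (drop i (P@w))"] unfolding A_def L_def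
    by (simp flip: of_nat_sum)
  also have "(\<Sum>b\<in>B. real (c b)) \<le> real n"
    using count_le[OF fB, of n "\<lambda>i. take k (drop i w)"] unfolding c_def
    by (simp flip: of_nat_sum)
  also have "real L / real n + real n * real L / (real n * real n) = 2 * real (length P) / real n"
    using n by (simp add: L_def field_simps)
  finally show ?thesis using n by (simp add: divide_right_mono mult_right_mono)
qed


lemma dist1_append:
  assumes "n + k \<le> length W + 1"
  shows "dist1 X k (Pk (W @ V) n) q = dist1 X k (Pk W n) q"
  unfolding dist1_def Pk_def
  by (rule sum.cong) (use assms in \<open>auto simp: language_k_def freq_append\<close>)

theorem mainTheorem5:
  fixes M :: "'m::metric_space set" and T :: "'m \<Rightarrow> 'm" and U :: "nat \<Rightarrow> 'm set"
    and N :: nat and X :: "(nat \<Rightarrow> nat) set"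
    and k m :: nat and qs :: "nat \<Rightarrow> nat list \<Rightarrow> real"
    and \<epsilon> :: real and \<omega>0 :: "nat list"
  assumes "topological_partition M T U N"
    and "X = partition_shift M T U N"
    and "has_specification (language X)"
    and "\<forall>i\<in>{1..m}. qs i \<in> S_k X k"
    and "\<epsilon> > 0"
    and "\<omega>0 \<in> language X"
  shows "\<exists>\<omega>\<in>language X. take (length \<omega>0) \<omega> = \<omega>0 \<and>
           (\<exists>ns :: nat \<Rightarrow> nat. strict_mono_on {1..m} ns \<and>
              (\<forall>i\<in>{1..m}. 1 \<le> ns i \<and> ns i + k \<le> length \<omega> + 1 \<and>
                 dist1 X k (Pk \<omega> (ns i)) (qs i) \<le> \<epsilon>))"
proof -
  obtain j where spec: "\<forall>a\<in>language X. \<forall>b\<in>language X. \<exists>u\<in>language X. length u \<le> j \<and> a @ u @ b \<in> language X"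
    using assms(3) unfolding has_specification_def by blast
  have key: "m' \<le> m \<Longrightarrow> \<exists>W\<in>language X. take (length \<omega>0) W = \<omega>0 \<and>
           (\<exists>ns :: nat \<Rightarrow> nat. strict_mono_on {1..m'} ns \<and>
              (\<forall>i\<in>{1..m'}. 1 \<le> ns i \<and> ns i + k \<le> length W + 1 \<and> ns i \<le> length W \<and>
                 dist1 X k (Pk W (ns i)) (qs i) \<le> \<epsilon>))" for m'
  proof (induction m')
    case 0
    show ?case by (intro bexI[of _ \<omega>0]) (auto simp: strict_mono_on_def assms(6))
  next
    case (Suc m')
    then obtain W ns where W: "W \<in> language X" "take (length \<omega>0) W = \<omega>0"
      and ns: "strict_mono_on {1..m'} ns"
      and nsp: "\<forall>i\<in>{1..m'}. 1 \<le> ns i \<and> ns i + k \<le> length W + 1 \<and> ns i \<le> length W \<and>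
                 dist1 X k (Pk W (ns i)) (qs i) \<le> \<epsilon>"
      by auto
    have "qs (Suc m') \<in> S_k X k" using assms(4) Suc.prems by auto
    then obtain \<omega>i where \<omega>i: "\<omega>i \<in> X" and acc: "\<forall>e>0. \<forall>M. \<exists>n\<ge>M. n \<ge> 1 \<and>
        dist1 X k (Pk (prefix_word \<omega>i (n + k)) n) (qs (Suc m')) < e"
      unfolding S_k_def by blast
    define M0 where "M0 = nat \<lceil>4 * real (length W + j) / \<epsilon>\<rceil>"
    obtain n where n: "n \<ge> M0" "n \<ge> 1"
      and nd: "dist1 X k (Pk (prefix_word \<omega>i (n + k)) n) (qs (Suc m')) < \<epsilon> / 2"
      using acc assms(5) by (meson half_gt_zero)
    define w where "w = prefix_word \<omega>i (n + k)"
    have lw: "length w = n + k" by (simp add: w_def prefix_word_def)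
    have wL: "w \<in> language X" unfolding language_def
      using \<omega>i by (intro CollectI bexI[of _ \<omega>i] exI[of _ 0]) (simp_all add: w_def prefix_word_def)
    obtain u where u: "u \<in> language X" "length u \<le> j" "W @ u @ w \<in> language X"
      using spec W(1) wL by blast
    define L where "L = length (W @ u)"
    define W' where "W' = W @ u @ w"
    define ns' where "ns' = ns(Suc m' := L + n)"
    have lW': "length W' = L + n + k" by (simp add: W'_def L_def lw)
    have LW: "length W \<le> L" by (simp add: L_def)
    have Lj: "real L \<le> real (length W + j)" using u(2) by (simp add: L_def)
    have nge: "4 * real (length W + j) / \<epsilon> \<le> real n"
      using n(1) real_nat_ceiling_ge[of "4 * real (length W + j) / \<epsilon>"] unfolding M0_def by linarith
    have bnd: "2 * real L / real n \<le> \<epsilon> / 2"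
    proof -
      have "4 * real (length W + j) \<le> \<epsilon> * real n" using nge assms(5) by (simp add: pos_divide_le_eq mult.commute)
      moreover have "4 * real L \<le> 4 * real (length W + j)" using Lj by simp
      ultimately have "4 * real L \<le> \<epsilon> * real n" by (rule order_trans[rotated])
      then show ?thesis using n(2) by (simp add: divide_simps)
    qed
    have newd: "dist1 X k (Pk W' (L + n)) (qs (Suc m')) \<le> \<epsilon>"
    proof (cases "finite (language_k X k)")
      case False then show ?thesis using assms(5) by (simp add: dist1_def)
    next
      case True
      have "dist1 X k (Pk W' (L + n)) (qs (Suc m')) \<le> 2 * real L / real n + dist1 X k (Pk w n) (qs (Suc m'))"
        unfolding dist1_def Pk_def W'_def L_def
        using approx[OF True, of k n "W @ u" w "qs (Suc m')"] n(2) by (simp add: language_k_def)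
      then show ?thesis using bnd nd unfolding w_def by linarith
    qed
    show ?case
    proof (intro bexI[of _ W'] conjI exI[of _ ns'])
      show "W' \<in> language X" using u(3) by (simp add: W'_def)
      show "take (length \<omega>0) W' = \<omega>0"
      proof -
        have "length \<omega>0 \<le> length W" using W(2) by (metis length_take min.absorb_iff2 min.cobounded2)
        then show ?thesis using W(2) by (simp add: W'_def)
      qed
      show "strict_mono_on {1..Suc m'} ns'"
      proof (rule strict_mono_onI)
        fix x y assume xy: "x \<in> {1..Suc m'}" "y \<in> {1..Suc m'}" "x < y"
        show "ns' x < ns' y"
        proof (cases "y = Suc m'")
          case True
          then have "x \<in> {1..m'}" using xy by auto
          then show ?thesis using nsp True LW n(2) by (force simp: ns'_def)
        next
          case False
          then show ?thesis using xy ns by (auto simp: ns'_def strict_mono_on_def)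
        qed
      qed
      show "\<forall>i\<in>{1..Suc m'}. 1 \<le> ns' i \<and> ns' i + k \<le> length W' + 1 \<and> ns' i \<le> length W' \<and>
                 dist1 X k (Pk W' (ns' i)) (qs i) \<le> \<epsilon>"
      proof
        fix i assume i: "i \<in> {1..Suc m'}"
        show "1 \<le> ns' i \<and> ns' i + k \<le> length W' + 1 \<and> ns' i \<le> length W' \<and>
                 dist1 X k (Pk W' (ns' i)) (qs i) \<le> \<epsilon>"
        proof (cases "i = Suc m'")
          case True
          then show ?thesis using newd lW' n(2) by (simp add: ns'_def)
        next
          case False
          then have i': "i \<in> {1..m'}" using i by auto
          have "dist1 X k (Pk W' (ns i)) (qs i) = dist1 X k (Pk W (ns i)) (qs i)"
            unfolding W'_def by (rule dist1_append) (use nsp i' in auto)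
          have "ns i \<le> length W" "ns i + k \<le> length W + 1" "1 \<le> ns i" "dist1 X k (Pk W (ns i)) (qs i) \<le> \<epsilon>"
            using nsp i' by auto
          then show ?thesis using \<open>dist1 X k (Pk W' (ns i)) (qs i) = _\<close> False lW' LW by (auto simp: ns'_def)
        qed
      qed
    qed
  qed
  from key[OF order_refl] show ?thesis by blast
qed

end
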